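(* If $\mathrm{parent}(j,r)=\langle j',r+1\rangle$, then $B(j,7\cdot 5^r)\subseteq B(j',7\cdot 5^{r+1})$.
   Context: Let $(V,d)$ be a metric space with diameter $W$, let $F\subseteq V$ be a finite set of facilities with opening costs $f_j>0$, and let $f_{\mathrm{min}}$ be the minimum opening cost. $B(x,R)$ denotes the ball of radius $R$ centered at $x$. A logradius is an integer $r$ with $f_{\mathrm{min}}\leq 5^r\leq 5W$; let $\rho_{\mathrm{max}}$ be the largest logradius. For each logradius $r$, let $J'_r=\{j\in F: f_j\leq 5^r\}$ and let $J_r$ be a maximal subset of $J'_r$ such that any two facilities in $J_r$ are at distance greater than $5^{r+1}$. Let $\Pi$ be the set of pairs $\langle j,r\rangle$ with $r$ a logradius and $j\in J_r$. An abstract tree over $\Pi$ is built: its root is the unique pair $\langle j,\rho_{\mathrm{max}}\rangle$, and for every $r<\rho_{\mathrm{max}}$ and $j\in J_r$, $\mathrm{parent}(j,r)=\langle j',r+1\rangle$ where $j'$ is the facility of $J_{r+1}$ closest to $j$ (ties broken arbitrarily). *)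

theory Defs
  imports "HOL-Analysis.Analysis"
begin

definition metric_diameter :: "'a set \<Rightarrow> ('a \<Rightarrow> 'a \<Rightarrow> real) \<Rightarrow> real" where
  "metric_diameter V d = (SUP x\<in>V. SUP y\<in>V. d x y)"

definition fmin :: "'a set \<Rightarrow> ('a \<Rightarrow> real) \<Rightarrow> real" where
  "fmin F f = Min (f ` F)"

definition is_logradius :: "real \<Rightarrow> 'a set \<Rightarrow> ('a \<Rightarrow> real) \<Rightarrow> int \<Rightarrow> bool" where
  "is_logradius W F f r \<longleftrightarrow> fmin F f \<le> (5::real) powi r \<and> (5::real) powi r \<le> 5 * W"

definition rho_max :: "real \<Rightarrow> 'a set \<Rightarrow> ('a \<Rightarrow> real) \<Rightarrow> int" where
  "rho_max W F f = (GREATEST r. is_logradius W F f r)"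

definition Jprime :: "'a set \<Rightarrow> ('a \<Rightarrow> real) \<Rightarrow> int \<Rightarrow> 'a set" where
  "Jprime F f r = {j \<in> F. f j \<le> (5::real) powi r}"

definition separated :: "('a \<Rightarrow> 'a \<Rightarrow> real) \<Rightarrow> real \<Rightarrow> 'a set \<Rightarrow> bool" where
  "separated d R S \<longleftrightarrow> (\<forall>x\<in>S. \<forall>y\<in>S. x \<noteq> y \<longrightarrow> d x y > R)"

definition maximal_separated :: "('a \<Rightarrow> 'a \<Rightarrow> real) \<Rightarrow> real \<Rightarrow> 'a set \<Rightarrow> 'a set \<Rightarrow> bool" where
  "maximal_separated d R A S \<longleftrightarrow>
     S \<subseteq> A \<and> separated d R S \<and> (\<forall>T. S \<subset> T \<and> T \<subseteq> A \<longrightarrow> \<not> separated d R T)"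

text \<open>parent(j,r) = <j', r+1>: for a pair <j,r> in Pi with r < rho_max, j' is a facility of
  J_{r+1} closest to j (any choice among ties).\<close>
definition is_parent ::
  "('a \<Rightarrow> 'a \<Rightarrow> real) \<Rightarrow> real \<Rightarrow> 'a set \<Rightarrow> ('a \<Rightarrow> real) \<Rightarrow> (int \<Rightarrow> 'a set)
     \<Rightarrow> 'a \<Rightarrow> int \<Rightarrow> 'a \<Rightarrow> bool" where
  "is_parent d W F f J j r j' \<longleftrightarrow>
     is_logradius W F f r \<and> j \<in> J r \<and> r < rho_max W F f \<and>
     j' \<in> J (r + 1) \<and> (\<forall>k\<in>J (r + 1). d j j' \<le> d j k)"

end

theory Submission
  imports Defs
begin

lemma logradius_bounded:
  assumes "is_logradius W F f y"
  shows "y \<le> max 0 \<lceil>5 * W\<rceil>"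
proof (rule ccontr)
  assume "\<not> ?thesis"
  hence y: "y > 0" "y > \<lceil>5 * W\<rceil>" by auto
  hence "(5::real) powi y = 5 ^ nat y" by (simp add: power_int_def)
  also have "\<dots> \<ge> real (nat y)"
  proof -
    have "real (nat y) < 2 ^ nat y" by (rule of_nat_less_two_power)
    also have "(2::real) ^ nat y \<le> 5 ^ nat y" by (rule power_mono) auto
    finally show ?thesis by simp
  qed
  finally have "(5::real) powi y \<ge> real_of_int y" using y by simp
  moreover have "real_of_int y > 5 * W" using y by linarith
  ultimately show False using assms unfolding is_logradius_def by linarith
qed

lemma rho_max_logradius:
  assumes "is_logradius W F f r"
  shows "is_logradius W F f (rho_max W F f)" "r \<le> rho_max W F f"
proof -
  define S where "S = {y. is_logradius W F f y \<and> y \<ge> r}"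
  have fin: "finite S"
    by (rule finite_subset[of _ "{r..max 0 \<lceil>5 * W\<rceil>}"])
       (auto simp: S_def dest: logradius_bounded)
  have ne: "r \<in> S" using assms by (simp add: S_def)
  define x where "x = Max S"
  have xS: "x \<in> S" unfolding x_def using fin ne by (intro Max_in) auto
  have gr: "\<And>y. is_logradius W F f y \<Longrightarrow> y \<le> x"
  proof -
    fix y assume "is_logradius W F f y"
    show "y \<le> x"
    proof (cases "y \<ge> r")
      case True thus ?thesis using fin \<open>is_logradius W F f y\<close> by (simp add: x_def S_def)
    next
      case False thus ?thesis using xS by (simp add: S_def)
    qed
  qed
  have eq: "rho_max W F f = x"
    unfolding rho_max_def
    by (rule Greatest_equality) (use xS gr in \<open>auto simp: S_def\<close>)
  show "is_logradius W F f (rho_max W F f)" using eq xS by (simp add: S_def)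
  show "r \<le> rho_max W F f" using eq xS by (simp add: S_def)
qed

theorem lemma2:
  fixes V :: "'a set" and d :: "'a \<Rightarrow> 'a \<Rightarrow> real" and F :: "'a set"
    and f :: "'a \<Rightarrow> real" and W :: real and J :: "int \<Rightarrow> 'a set"
    and j j' :: 'a and r :: int
  assumes "Metric_space V d"
    and "Metric_space.mbounded V d V" and "V \<noteq> {}"
    and "W = metric_diameter V d"
    and "F \<subseteq> V" and "finite F" and "F \<noteq> {}"
    and "\<forall>j\<in>F. f j > 0"
    and "\<forall>r. is_logradius W F f r \<longrightarrow>
            maximal_separated d ((5::real) powi (r + 1)) (Jprime F f r) (J r)"
    and "is_parent d W F f J j r j'"
  shows "Metric_space.mball V d j (7 * (5::real) powi r)
           \<subseteq> Metric_space.mball V d j' (7 * (5::real) powi (r + 1))"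
proof -
  interpret M: Metric_space V d by fact
  have lr: "is_logradius W F f r" and jJ: "j \<in> J r" and rl: "r < rho_max W F f"
    and j'J: "j' \<in> J (r+1)" and cl: "\<forall>k\<in>J (r + 1). d j j' \<le> d j k"
    using assms(10) by (auto simp: is_parent_def)
  have p1: "(5::real) powi (r+1) = 5 * 5 powi r" by (simp add: power_int_add_1')
  have p2: "(5::real) powi (r+1+1) = 25 * 5 powi r" using power_int_add_1'[of "5::real" "r+1"] p1 by simp
  have pos: "(5::real) powi r > 0" by simp
  have lr1: "is_logradius W F f (r+1)"
  proof -
    have "is_logradius W F f (rho_max W F f)" by (rule rho_max_logradius(1)[OF lr])
    moreover have "(5::real) powi (r+1) \<le> 5 powi (rho_max W F f)"
      by (rule power_int_increasing) (use rl in auto)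
    ultimately show ?thesis using lr pos p1 unfolding is_logradius_def by linarith
  qed
  have ms: "maximal_separated d ((5::real) powi (r+1+1)) (Jprime F f (r+1)) (J (r+1))"
    using assms(9) lr1 by blast
  have ms0: "maximal_separated d ((5::real) powi (r+1)) (Jprime F f r) (J r)"
    using assms(9) lr by blast
  have jF: "j \<in> F" "f j \<le> 5 powi r" using ms0 jJ by (auto simp: maximal_separated_def Jprime_def)
  have "f j \<le> 5 powi (r+1)" using jF(2) pos p1 by linarith
  hence jJ1: "j \<in> Jprime F f (r+1)" using jF(1) unfolding Jprime_def by simp
  have JV: "J (r+1) \<subseteq> V" using ms assms(5) by (auto simp: maximal_separated_def Jprime_def)
  have jV: "j \<in> V" using jF assms(5) by auto
  have j'V: "j' \<in> V" using JV j'J by auto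
  have dj: "d j j' \<le> 25 * 5 powi r"
  proof (cases "j \<in> J (r+1)")
    case True
    hence "d j j' \<le> d j j" using cl by blast
    also have "d j j = 0" using jV by simp
    finally show ?thesis using pos by linarith
  next
    case False
    have "\<not> separated d (5 powi (r+1+1)) (insert j (J (r+1)))"
      using ms False jJ1 unfolding maximal_separated_def by blast
    then obtain x y where xy: "x \<in> insert j (J (r+1))" "y \<in> insert j (J (r+1))" "x \<noteq> y"
      "d x y \<le> 5 powi (r+1+1)" unfolding separated_def by force
    have sep: "separated d (5 powi (r+1+1)) (J (r+1))" using ms by (simp add: maximal_separated_def)
    obtain k where k: "k \<in> J (r+1)" "d j k \<le> 5 powi (r+1+1)"
    proof (cases "x = j")
      case True
      thus ?thesis using xy that by auto
    next
      case False
      hence "x \<in> J (r+1)" using xy by auto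
      moreover have "y = j" using xy sep False \<open>x \<in> J (r+1)\<close> unfolding separated_def by force
      moreover have "d j x = d x y" using \<open>y = j\<close> M.commute by simp
      ultimately show ?thesis using that xy by auto
    qed
    thus ?thesis using cl p2 by force
  qed
  show ?thesis
  proof
    fix x assume "x \<in> M.mball j (7 * 5 powi r)"
    hence x: "x \<in> V" "d j x < 7 * 5 powi r" by auto
    have "d j' x \<le> d j' j + d j x" using M.triangle j'V jV x by blast
    also have "d j' j = d j j'" using M.commute by simp
    finally have "d j' x < 7 * 5 powi (r+1)" using dj x p1 pos by linarith
    thus "x \<in> M.mball j' (7 * 5 powi (r+1))" using x j'V by auto
  qed
qed

end
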